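(* Let $(N,g)$ be a simply connected five-dimensional two-step nilpotent Lie group with a left-invariant Riemannian metric, with Lie algebra $\mathfrak{n}$ and orthonormal basis $e_1,\dots,e_5$ as in one of the three normal forms below, and let $\mathfrak{h}$ be the center of $\mathfrak{n}$. A left-invariant vector field $X\in\mathfrak{n}$ is harmonic if and only if: (a) $X\in\mathfrak{h}^\perp$, in the cases where $\dim\mathfrak{h}$ is $1$ or $2$ (Cases 1 and 2); (b) $\langle X,e_3\rangle=0$, in the case where $\dim\mathfrak{h}=3$ (Case 3).
   Context: A Lie algebra $\mathfrak{n}$ is two-step nilpotent if $[\mathfrak{n},\mathfrak{n}]\neq 0$ and $[\mathfrak{n},[\mathfrak{n},\mathfrak{n}]]=0$. Left-invariant vector fields are identified with elements of $\mathfrak{n}=T_eN$, and $g$ with an inner product $\langle\cdot,\cdot\rangle$ on $\mathfrak{n}$. Up to isometry, such $(\mathfrak{n},\langle\cdot,\cdot\rangle)$ admits an orthonormal basis $e_1,\dots,e_5$ with one of the following bracket structures (all brackets not listed being zero): (Case 1, center of dimension 1) $[e_1,e_2]=\lambda e_5$, $[e_3,e_4]=\mu e_5$ with $\lambda\ge\mu>0$; (Case 2, center of dimension 2) $[e_1,e_2]=\lambda e_4$, $[e_1,e_3]=\mu e_5$ with $\lambda\ge\mu>0$; (Case 3, center of dimension 3) $[e_1,e_2]=\lambda e_3$ with $\lambda>0$. A vector field $X$ is harmonic if its metric dual 1-form $X^\flat=g(X,\cdot)$ satisfies $\Delta X^\flat=0$, where $\Delta=d\circ\delta+\delta\circ d$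 is the Laplace–Beltrami operator on forms, $d$ is the exterior derivative and $\delta=-\mathrm{div}$ is the codifferential. *)

theory Defs
  imports "HOL-Analysis.Analysis" "HOL-Library.Numeral_Type"
begin

text \<open>The Lie algebra n is identified, via the orthonormal basis e_1,...,e_5,
 with real^5 carrying the standard (Euclidean) inner product.  Left-invariant
 vector fields are elements of n; left-invariant k-forms are k-linear
 (alternating) functions on n; left-invariant functions are constants.\<close>

type_synonym lalg = "real^5"

definition e :: "nat \<Rightarrow> lalg" where
  "e i = axis (of_nat i :: 5) 1"

text \<open>Levi-Civita connection on left-invariant fields (Koszul formula).\<close>
definition nabla :: "(lalg \<Rightarrow> lalg \<Rightarrow> lalg) \<Rightarrow> lalg \<Rightarrow> lalg \<Rightarrow> lalg" where
  "nabla br X Y = (\<Sum>k\<in>{1..5}. ((1/2) * (br X Y \<bullet> e k - br Y (e k) \<bullet> X + br (e k) X \<bullet> Y)) *\<^sub>R e k)"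

text \<open>Exterior derivative of a left-invariant function (a constant): zero.\<close>
definition d0 :: "real \<Rightarrow> lalg \<Rightarrow> real" where
  "d0 c = (\<lambda>Y. 0)"

text \<open>Exterior derivative of a left-invariant 1-form:
  d theta (Y,Z) = Y(theta Z) - Z(theta Y) - theta [Y,Z] = - theta [Y,Z].\<close>
definition d1 :: "(lalg \<Rightarrow> lalg \<Rightarrow> lalg) \<Rightarrow> (lalg \<Rightarrow> real) \<Rightarrow> lalg \<Rightarrow> lalg \<Rightarrow> real" where
  "d1 br \<theta> Y Z = - \<theta> (br Y Z)"

text \<open>Covariant derivatives of left-invariant forms (the derivative of the
 constant function theta(A), resp. omega(A,B), vanishes).\<close>
definition cov1 :: "(lalg \<Rightarrow> lalg \<Rightarrow> lalg) \<Rightarrow> lalg \<Rightarrow> (lalg \<Rightarrow> real) \<Rightarrow> lalg \<Rightarrow> real" where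
  "cov1 br X \<theta> A = - \<theta> (nabla br X A)"

definition cov2 :: "(lalg \<Rightarrow> lalg \<Rightarrow> lalg) \<Rightarrow> lalg \<Rightarrow> (lalg \<Rightarrow> lalg \<Rightarrow> real) \<Rightarrow> lalg \<Rightarrow> lalg \<Rightarrow> real" where
  "cov2 br X \<omega> A B = - \<omega> (nabla br X A) B - \<omega> A (nabla br X B)"

text \<open>Codifferential (delta = - div) on left-invariant 1-forms and 2-forms.\<close>
definition delta1 :: "(lalg \<Rightarrow> lalg \<Rightarrow> lalg) \<Rightarrow> (lalg \<Rightarrow> real) \<Rightarrow> real" where
  "delta1 br \<theta> = - (\<Sum>i\<in>{1..5}. cov1 br (e i) \<theta> (e i))"

definition delta2 :: "(lalg \<Rightarrow> lalg \<Rightarrow> lalg) \<Rightarrow> (lalg \<Rightarrow> lalg \<Rightarrow> real) \<Rightarrow> lalg \<Rightarrow> real" where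
  "delta2 br \<omega> Y = - (\<Sum>i\<in>{1..5}. cov2 br (e i) \<omega> (e i) Y)"

definition laplace1 :: "(lalg \<Rightarrow> lalg \<Rightarrow> lalg) \<Rightarrow> (lalg \<Rightarrow> real) \<Rightarrow> lalg \<Rightarrow> real" where
  "laplace1 br \<theta> = (\<lambda>Y. d0 (delta1 br \<theta>) Y + delta2 br (d1 br \<theta>) Y)"

definition flat :: "lalg \<Rightarrow> lalg \<Rightarrow> real" where
  "flat X = (\<lambda>Y. X \<bullet> Y)"

definition harmonic :: "(lalg \<Rightarrow> lalg \<Rightarrow> lalg) \<Rightarrow> lalg \<Rightarrow> bool" where
  "harmonic br X \<longleftrightarrow> laplace1 br (flat X) = (\<lambda>Y. 0)"

definition center :: "(lalg \<Rightarrow> lalg \<Rightarrow> lalg) \<Rightarrow> lalg set" where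
  "center br = {Z. \<forall>Y. br Z Y = 0}"

definition orth_compl :: "lalg set \<Rightarrow> lalg set" where
  "orth_compl S = {X. \<forall>Z\<in>S. X \<bullet> Z = 0}"

definition br1 :: "real \<Rightarrow> real \<Rightarrow> lalg \<Rightarrow> lalg \<Rightarrow> lalg" where
  "br1 lam mu X Y =
     (lam * ((X \<bullet> e 1) * (Y \<bullet> e 2) - (X \<bullet> e 2) * (Y \<bullet> e 1))
      + mu * ((X \<bullet> e 3) * (Y \<bullet> e 4) - (X \<bullet> e 4) * (Y \<bullet> e 3))) *\<^sub>R e 5"

definition br2 :: "real \<Rightarrow> real \<Rightarrow> lalg \<Rightarrow> lalg \<Rightarrow> lalg" where
  "br2 lam mu X Y =
     (lam * ((X \<bullet> e 1) * (Y \<bullet> e 2) - (X \<bullet> e 2) * (Y \<bullet> e 1))) *\<^sub>R e 4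
      + (mu * ((X \<bullet> e 1) * (Y \<bullet> e 3) - (X \<bullet> e 3) * (Y \<bullet> e 1))) *\<^sub>R e 5"

definition br3 :: "real \<Rightarrow> lalg \<Rightarrow> lalg \<Rightarrow> lalg" where
  "br3 lam X Y =
     (lam * ((X \<bullet> e 1) * (Y \<bullet> e 2) - (X \<bullet> e 2) * (Y \<bullet> e 1))) *\<^sub>R e 3"

end

theory Submission
  imports Defs
begin

lemma sum5: "sum f {1..5::nat} = f 1 + f 2 + f 3 + f 4 + f 5"
  by (simp add: eval_nat_numeral)

lemma ee: "e 1 \<bullet> e 1 = 1" "e 1 \<bullet> e 2 = 0" "e 1 \<bullet> e 3 = 0" "e 1 \<bullet> e 4 = 0" "e 1 \<bullet> e 5 = 0"
 "e 2 \<bullet> e 1 = 0" "e 2 \<bullet> e 2 = 1" "e 2 \<bullet> e 3 = 0" "e 2 \<bullet> e 4 = 0" "e 2 \<bullet> e 5 = 0"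
 "e 3 \<bullet> e 1 = 0" "e 3 \<bullet> e 2 = 0" "e 3 \<bullet> e 3 = 1" "e 3 \<bullet> e 4 = 0" "e 3 \<bullet> e 5 = 0"
 "e 4 \<bullet> e 1 = 0" "e 4 \<bullet> e 2 = 0" "e 4 \<bullet> e 3 = 0" "e 4 \<bullet> e 4 = 1" "e 4 \<bullet> e 5 = 0"
 "e 5 \<bullet> e 1 = 0" "e 5 \<bullet> e 2 = 0" "e 5 \<bullet> e 3 = 0" "e 5 \<bullet> e 4 = 0" "e 5 \<bullet> e 5 = 1"
  unfolding e_def by (simp_all add: inner_axis_axis)

lemmas ee' = ee[unfolded One_nat_def]

lemma univ5: "(UNIV::5 set) = {0,1,2,3,4}"
  by (rule sym, rule card_subset_eq) simp_all
lemma ofn: "(of_nat 1 :: 5) = 1" "(of_nat 2 :: 5) = 2" "(of_nat 3 :: 5) = 3" "(of_nat 4 :: 5) = 4" "(of_nat 5 :: 5) = 0"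
  by simp_all
lemma ecomp: "v \<bullet> e 1 = v $ 1" "v \<bullet> e 2 = v $ 2" "v \<bullet> e 3 = v $ 3" "v \<bullet> e 4 = v $ 4" "v \<bullet> e 5 = v $ 0"
  unfolding e_def ofn by (simp_all add: inner_axis)
lemma dist: "(0::5) \<noteq> 1" "(0::5) \<noteq> 2" "(0::5) \<noteq> 3" "(0::5) \<noteq> 4" "(1::5) \<noteq> 2" "(1::5) \<noteq> 3" "(1::5) \<noteq> 4"
  "(2::5) \<noteq> 3" "(2::5) \<noteq> 4" "(3::5) \<noteq> 4" by simp_all
lemma inner5': "(v::lalg) \<bullet> w = (v \<bullet> e 1) * (w \<bullet> e 1) + (v \<bullet> e 2) * (w \<bullet> e 2) + (v \<bullet> e 3) * (w \<bullet> e 3) + (v \<bullet> e 4) * (w \<bullet> e 4) + (v \<bullet> e 5) * (w \<bullet> e 5)"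
proof -
  have "v \<bullet> w = (\<Sum>i\<in>UNIV. v$i * w$i)" by (simp add: inner_vec_def)
  also have "\<dots> = v$0*w$0 + (v$1*w$1 + (v$2*w$2 + (v$3*w$3 + v$4*w$4)))"
    unfolding univ5 by (simp add: dist)
  finally show ?thesis unfolding ecomp by simp
qed

lemma sumE: "(\<Sum>k\<in>{1..5}. c k *\<^sub>R e k) \<bullet> e 1 = c 1"
  "(\<Sum>k\<in>{1..5}. c k *\<^sub>R e k) \<bullet> e 2 = c 2"
  "(\<Sum>k\<in>{1..5}. c k *\<^sub>R e k) \<bullet> e 3 = c 3"
  "(\<Sum>k\<in>{1..5}. c k *\<^sub>R e k) \<bullet> e 4 = c 4"
  "(\<Sum>k\<in>{1..5}. c k *\<^sub>R e k) \<bullet> e 5 = c 5"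
  unfolding sum5 by (simp_all only: inner_add_left inner_scaleR_left ee mult_1_right mult_0_right add_0_right add_0_left)

lemma N: "nabla br A B \<bullet> e 1 = (1/2) * (br A B \<bullet> e 1 - br B (e 1) \<bullet> A + br (e 1) A \<bullet> B)"
  "nabla br A B \<bullet> e 2 = (1/2) * (br A B \<bullet> e 2 - br B (e 2) \<bullet> A + br (e 2) A \<bullet> B)"
  "nabla br A B \<bullet> e 3 = (1/2) * (br A B \<bullet> e 3 - br B (e 3) \<bullet> A + br (e 3) A \<bullet> B)"
  "nabla br A B \<bullet> e 4 = (1/2) * (br A B \<bullet> e 4 - br B (e 4) \<bullet> A + br (e 4) A \<bullet> B)"
  "nabla br A B \<bullet> e 5 = (1/2) * (br A B \<bullet> e 5 - br B (e 5) \<bullet> A + br (e 5) A \<bullet> B)"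
  unfolding nabla_def by (rule sumE)+

lemma B1: "V \<bullet> br1 lam mu A B = (lam * ((A \<bullet> e 1) * (B \<bullet> e 2) - (A \<bullet> e 2) * (B \<bullet> e 1))
      + mu * ((A \<bullet> e 3) * (B \<bullet> e 4) - (A \<bullet> e 4) * (B \<bullet> e 3))) * (V \<bullet> e 5)"
  "br1 lam mu A B \<bullet> V = (lam * ((A \<bullet> e 1) * (B \<bullet> e 2) - (A \<bullet> e 2) * (B \<bullet> e 1))
      + mu * ((A \<bullet> e 3) * (B \<bullet> e 4) - (A \<bullet> e 4) * (B \<bullet> e 3))) * (V \<bullet> e 5)"
  unfolding br1_def by (simp_all add: inner_commute)


lemma L1: "laplace1 (br1 lam mu) (flat X) Y = (lam^2+mu^2) * (X \<bullet> e 5) * (Y \<bullet> e 5)"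
  unfolding laplace1_def d0_def delta2_def cov2_def d1_def flat_def sum5
  apply (simp only: B1 N ee)
  apply (simp only: mult_1_right mult_zero_right mult_zero_left mult_1_left add_0_right add_0_left diff_0_right diff_0 minus_zero)
  apply (simp add: algebra_simps power2_eq_square)
  done

lemma B2: "V \<bullet> br2 lam mu A B = (lam * ((A \<bullet> e 1) * (B \<bullet> e 2) - (A \<bullet> e 2) * (B \<bullet> e 1))) * (V \<bullet> e 4)
      + (mu * ((A \<bullet> e 1) * (B \<bullet> e 3) - (A \<bullet> e 3) * (B \<bullet> e 1))) * (V \<bullet> e 5)"
  "br2 lam mu A B \<bullet> V = (lam * ((A \<bullet> e 1) * (B \<bullet> e 2) - (A \<bullet> e 2) * (B \<bullet> e 1))) * (V \<bullet> e 4)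
      + (mu * ((A \<bullet> e 1) * (B \<bullet> e 3) - (A \<bullet> e 3) * (B \<bullet> e 1))) * (V \<bullet> e 5)"
  unfolding br2_def by (simp_all add: inner_commute inner_add_left inner_add_right)

lemma B3: "V \<bullet> br3 lam A B = (lam * ((A \<bullet> e 1) * (B \<bullet> e 2) - (A \<bullet> e 2) * (B \<bullet> e 1))) * (V \<bullet> e 3)"
  "br3 lam A B \<bullet> V = (lam * ((A \<bullet> e 1) * (B \<bullet> e 2) - (A \<bullet> e 2) * (B \<bullet> e 1))) * (V \<bullet> e 3)"
  unfolding br3_def by (simp_all add: inner_commute)

lemma L2: "laplace1 (br2 lam mu) (flat X) Y = lam^2 * (X \<bullet> e 4) * (Y \<bullet> e 4) + mu^2 * (X \<bullet> e 5) * (Y \<bullet> e 5)"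
  unfolding laplace1_def d0_def delta2_def cov2_def d1_def flat_def sum5
  apply (simp only: B2 N ee)
  apply (simp only: mult_1_right mult_zero_right mult_zero_left mult_1_left add_0_right add_0_left diff_0_right diff_0 minus_zero)
  apply (simp add: algebra_simps power2_eq_square)
  done

lemma L3: "laplace1 (br3 lam) (flat X) Y = lam^2 * (X \<bullet> e 3) * (Y \<bullet> e 3)"
  unfolding laplace1_def d0_def delta2_def cov2_def d1_def flat_def sum5
  apply (simp only: B3 N ee)
  apply (simp only: mult_1_right mult_zero_right mult_zero_left mult_1_left add_0_right add_0_left diff_0_right diff_0 minus_zero)
  apply (simp add: algebra_simps power2_eq_square)
  done

lemma harm_iff: "harmonic br X \<longleftrightarrow> (\<forall>Y. laplace1 br (flat X) Y = 0)"
  unfolding harmonic_def by (simp add: fun_eq_iff)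

lemma C1:
  assumes "lam > 0" "mu > 0"
  shows "X \<in> orth_compl (center (br1 lam mu)) \<longleftrightarrow> X \<bullet> e 5 = 0"
proof
  assume "X \<in> orth_compl (center (br1 lam mu))"
  moreover have "e 5 \<in> center (br1 lam mu)"
    unfolding center_def br1_def by (simp add: ee ee')
  ultimately show "X \<bullet> e 5 = 0" unfolding orth_compl_def by blast
next
  assume x5: "X \<bullet> e 5 = 0"
  show "X \<in> orth_compl (center (br1 lam mu))"
    unfolding orth_compl_def
  proof (intro CollectI ballI)
    fix Z assume "Z \<in> center (br1 lam mu)"
    hence z: "\<And>Y. br1 lam mu Z Y \<bullet> e 5 = 0" unfolding center_def by simp
    have "Z \<bullet> e 1 = 0" using z[of "e 2"] assms by (simp add: B1 ee ee')
    moreover have "Z \<bullet> e 2 = 0" using z[of "e 1"] assms by (simp add: B1 ee ee')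
    moreover have "Z \<bullet> e 3 = 0" using z[of "e 4"] assms by (simp add: B1 ee ee')
    moreover have "Z \<bullet> e 4 = 0" using z[of "e 3"] assms by (simp add: B1 ee ee')
    ultimately show "X \<bullet> Z = 0" using x5 by (simp only: inner5'[of X Z] mult_zero_left mult_zero_right add_0_left add_0_right)
  qed
qed

lemma C2:
  assumes "lam > 0" "mu > 0"
  shows "X \<in> orth_compl (center (br2 lam mu)) \<longleftrightarrow> X \<bullet> e 4 = 0 \<and> X \<bullet> e 5 = 0"
proof
  assume "X \<in> orth_compl (center (br2 lam mu))"
  moreover have "e 5 \<in> center (br2 lam mu)" "e 4 \<in> center (br2 lam mu)"
    unfolding center_def br2_def by (simp_all add: ee ee')
  ultimately show "X \<bullet> e 4 = 0 \<and> X \<bullet> e 5 = 0" unfolding orth_compl_def by blast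
next
  assume x5: "X \<bullet> e 4 = 0 \<and> X \<bullet> e 5 = 0"
  show "X \<in> orth_compl (center (br2 lam mu))"
    unfolding orth_compl_def
  proof (intro CollectI ballI)
    fix Z assume "Z \<in> center (br2 lam mu)"
    hence z: "\<And>Y. br2 lam mu Z Y \<bullet> e 5 = 0" "\<And>Y. br2 lam mu Z Y \<bullet> e 4 = 0" unfolding center_def by simp_all
    have "Z \<bullet> e 1 = 0" using z(2)[of "e 2"] assms by (simp add: B2 ee ee')
    moreover have "Z \<bullet> e 2 = 0" using z(2)[of "e 1"] assms by (simp add: B2 ee ee')
    moreover have "Z \<bullet> e 3 = 0" using z(1)[of "e 1"] assms by (simp add: B2 ee ee')
    ultimately show "X \<bullet> Z = 0" using x5 by (simp only: inner5'[of X Z] mult_zero_left mult_zero_right add_0_left add_0_right)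
  qed
qed

theorem mainTheorem5:
  fixes lam mu :: real and X :: lalg
  shows "(lam \<ge> mu \<and> mu > 0 \<longrightarrow>
            (harmonic (br1 lam mu) X \<longleftrightarrow> X \<in> orth_compl (center (br1 lam mu))))
       \<and> (lam \<ge> mu \<and> mu > 0 \<longrightarrow>
            (harmonic (br2 lam mu) X \<longleftrightarrow> X \<in> orth_compl (center (br2 lam mu))))
       \<and> (lam > 0 \<longrightarrow> (harmonic (br3 lam) X \<longleftrightarrow> X \<bullet> e 3 = 0))"
proof (intro conjI impI)
  assume a: "mu \<le> lam \<and> 0 < mu"
  hence p: "lam > 0" "mu > 0" by auto
  have pos: "lam^2 + mu^2 > 0" using p by (simp add: add_pos_pos)
  show "harmonic (br1 lam mu) X \<longleftrightarrow> X \<in> orth_compl (center (br1 lam mu))"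
    unfolding harm_iff L1 C1[OF p]
  proof
    assume "\<forall>Y. (lam\<^sup>2 + mu\<^sup>2) * (X \<bullet> e 5) * (Y \<bullet> e 5) = 0"
    from this[rule_format, of "e 5"] pos show "X \<bullet> e 5 = 0" by (auto simp: ee)
  qed simp
next
  assume a: "mu \<le> lam \<and> 0 < mu"
  hence p: "lam > 0" "mu > 0" by auto
  show "harmonic (br2 lam mu) X \<longleftrightarrow> X \<in> orth_compl (center (br2 lam mu))"
    unfolding harm_iff L2 C2[OF p]
  proof
    assume h: "\<forall>Y. lam\<^sup>2 * (X \<bullet> e 4) * (Y \<bullet> e 4) + mu\<^sup>2 * (X \<bullet> e 5) * (Y \<bullet> e 5) = 0"
    from h[rule_format, of "e 5"] h[rule_format, of "e 4"] p
    show "X \<bullet> e 4 = 0 \<and> X \<bullet> e 5 = 0" by (simp add: ee)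
  qed simp
next
  assume p: "lam > 0"
  show "harmonic (br3 lam) X \<longleftrightarrow> X \<bullet> e 3 = 0"
    unfolding harm_iff L3
  proof
    assume h: "\<forall>Y. lam\<^sup>2 * (X \<bullet> e 3) * (Y \<bullet> e 3) = 0"
    from h[rule_format, of "e 3"] p show "X \<bullet> e 3 = 0" by (simp add: ee)
  qed simp
qed

end
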